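(* Let $n\ge 1$ and let $B\in\mathbb{R}^{n\times n}$ satisfy $B_{ij}\ge 0$ and $\sum_{j=1}^n B_{ij}\le 1$ for all $i,j\in\{1,\dots,n\}$. Let $\zeta=\frac{1}{n^2}\sum_{i=1}^n\sum_{j=1}^n \mathbb{1}(B_{ij}>0)$ and define the average repetition probability $R=\sum_{k=1}^\infty \operatorname{tr}\!\left(\frac{B^{2k}}{\zeta^k n^k}\right)$. If $\zeta n>\rho(B^2)$, then $$R=\operatorname{tr}\!\left(B^2(\zeta n I-B^2)^{-1}\right)\le \frac{\|B^2\|_*}{\sigma_n(\zeta n I-B^2)}.$$
   Context: $B$ is the sub-transition matrix of a Markov generation model over a vocabulary of $n$ words (the full transition matrix on $n+1$ states, the last being an absorbing end-of-sentence state, is $A=\begin{bmatrix}B & b\\ 0 & 1\end{bmatrix}$ with $b_i=1-\sum_{j}B_{ij}$). $\mathbb{1}(\cdot)$ is the indicator function, $\rho(\cdot)$ denotes the spectral radius, $\|\cdot\|_*$ the nuclear norm (sum of singular values), $\sigma_n(\cdot)$ the smallest singular value of an $n\times n$ matrix, and $I$ the $n\times n$ identity matrix. *)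

theory Defs
  imports "Jordan_Normal_Form.Spectral_Radius" "Jordan_Normal_Form.Gauss_Jordan_Elimination"
          "HOL-Computational_Algebra.Polynomial"
begin

definition mtrace :: "'a :: comm_ring_1 mat \<Rightarrow> 'a" where
  "mtrace A = (\<Sum>i<dim_row A. A $$ (i, i))"

definition minv :: "real mat \<Rightarrow> real mat" where
  "minv A = the (mat_inverse A)"

definition singular_values :: "real mat \<Rightarrow> real multiset" where
  "singular_values A = image_mset sqrt (proots (char_poly (transpose_mat A * A)))"

definition nuclear_norm :: "real mat \<Rightarrow> real" where
  "nuclear_norm A = sum_mset (singular_values A)"

definition sigma_min :: "real mat \<Rightarrow> real" where
  "sigma_min A = Min (set_mset (singular_values A))"

definition rspec_radius :: "real mat \<Rightarrow> real" where
  "rspec_radius A = spectral_radius (map_mat complex_of_real A)"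

end

theory Submission
  imports Defs "HOL-Analysis.L2_Norm"
begin

definition cinner :: "complex vec \<Rightarrow> complex vec \<Rightarrow> complex" where
  "cinner u v = (\<Sum>a<dim_vec v. cnj (u$a) * v$a)"

definition cnsq :: "complex vec \<Rightarrow> real" where
  "cnsq v = (\<Sum>a<dim_vec v. (cmod (v$a))^2)"

definition adj :: "complex mat \<Rightarrow> complex mat" where
  "adj A = mat (dim_col A) (dim_row A) (\<lambda>(i,j). cnj (A $$ (j,i)))"

lemma adj_index[simp]: "i < dim_col A \<Longrightarrow> j < dim_row A \<Longrightarrow> adj A $$ (i,j) = cnj (A $$ (j,i))"
  "dim_row (adj A) = dim_col A" "dim_col (adj A) = dim_row A"
  by (auto simp: adj_def)

lemma adj_carrier[simp]: "A \<in> carrier_mat n m \<Longrightarrow> adj A \<in> carrier_mat m n"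
  unfolding carrier_mat_def by simp

lemma scalar_prod_sum: "v \<bullet> w = (\<Sum>i<dim_vec w. v $ i * w $ i)"
  unfolding scalar_prod_def by (simp add: atLeast0LessThan)

lemma mult_index_sum: "i < dim_row A \<Longrightarrow> j < dim_col B \<Longrightarrow> dim_col A = dim_row B \<Longrightarrow>
   (A * B) $$ (i,j) = (\<Sum>k<dim_row B. A $$ (i,k) * B $$ (k,j))"
  by (simp add: scalar_prod_sum)

lemma adj_mult: assumes "A \<in> carrier_mat n m" "B \<in> carrier_mat m k"
  shows "adj (A * B) = adj B * adj A"
proof (rule eq_matI)
  fix i j assume "i < dim_row (adj B * adj A)" "j < dim_col (adj B * adj A)"
  then show "adj (A * B) $$ (i, j) = (adj B * adj A) $$ (i, j)"
    using assms by (simp add: mult_index_sum mult.commute cnj_sum del: index_mult_mat(1))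
qed (use assms in auto)

lemma adj_adj[simp]: "adj (adj A) = A"
proof (rule eq_matI)
  fix i j assume "i < dim_row A" "j < dim_col A"
  then show "adj (adj A) $$ (i, j) = A $$ (i, j)" by simp
qed simp_all

lemma mtrace_comm: assumes "A \<in> carrier_mat n m" "B \<in> carrier_mat m n"
  shows "mtrace (A * B) = mtrace (B * A)"
proof -
  have "mtrace (A * B) = (\<Sum>i<n. \<Sum>k<m. A $$ (i,k) * B $$ (k,i))"
    using assms unfolding mtrace_def by (auto simp: scalar_prod_sum intro!: sum.cong)
  also have "\<dots> = (\<Sum>k<m. \<Sum>i<n. B $$ (k,i) * A $$ (i,k))"
    by (subst sum.swap) (simp add: mult.commute)
  also have "\<dots> = mtrace (B * A)"
    using assms unfolding mtrace_def by (auto simp: scalar_prod_sum intro!: sum.cong)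
  finally show ?thesis .
qed


lemma cmod_sq_cnj: "complex_of_real ((cmod z)^2) = cnj z * z"
  by (metis complex_norm_square mult.commute)

lemma herm_nonzero_ev: assumes Z: "Z \<in> carrier_mat n n" and h: "adj Z = Z" and nz: "Z \<noteq> 0\<^sub>m n n"
  shows "\<exists>\<mu>. \<mu> \<noteq> 0 \<and> eigenvalue Z \<mu>"
proof (rule ccontr)
  assume "\<not> ?thesis"
  hence ev0: "\<And>\<mu>. eigenvalue Z \<mu> \<Longrightarrow> \<mu> = 0" by auto
  obtain as where cp: "char_poly Z = (\<Prod>a\<leftarrow>as. [:-a,1:])" and len: "length as = n"
    using char_poly_factorized[OF Z] by auto
  obtain T P Q where sd: "schur_decomposition Z as = (T,P,Q)" by (cases "schur_decomposition Z as") auto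
  from schur_decomposition[OF Z cp sd] have sim: "similar_mat_wit Z T P Q"
    and ut: "upper_triangular T" and dg: "diag_mat T = as" by auto
  note simD = similar_mat_witD2[OF Z sim]
  have T: "T \<in> carrier_mat n n" and P: "P \<in> carrier_mat n n" and Q: "Q \<in> carrier_mat n n"
    using simD by auto
  have as0: "a = 0" if "a \<in> set as" for a
  proof -
    have "poly (char_poly Z) a = 0" unfolding cp using linear_poly_root[OF that] .
    then have "eigenvalue Z a" using eigenvalue_root_char_poly[OF Z] by simp
    then show ?thesis using ev0 by auto
  qed
  have Tii: "T $$ (i,i) = 0" if "i < n" for i
  proof -
    have "diag_mat T ! i = T $$ (i,i)" using T that unfolding diag_mat_def by auto
    moreover have "diag_mat T ! i \<in> set as" using dg len that by (metis nth_mem)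
    ultimately show ?thesis using as0 by metis
  qed
  have utT: "T $$ (i,j) = 0" if "i < n" "j < i" for i j
    using ut that T unfolding upper_triangular_def by auto
  have "mtrace (T * T) = (\<Sum>i<n. \<Sum>k<n. T $$ (i,k) * T $$ (k,i))"
    using T unfolding mtrace_def by (auto simp: scalar_prod_sum intro!: sum.cong)
  also have "\<dots> = 0"
  proof (intro sum.neutral ballI)
    fix i k assume "i \<in> {..<n}" "k \<in> {..<n}"
    then show "T $$ (i,k) * T $$ (k,i) = 0"
      using utT[of i k] utT[of k i] Tii[of i] by (cases "k < i"; cases "i < k") auto
  qed
  finally have trT: "mtrace (T * T) = 0" .
  have "Z * Z = P * (T * T) * Q"
  proof -
    have "Z * Z = (P * T * Q) * (P * T * Q)" using simD by metis
    also have "\<dots> = P * T * (Q * P) * T * Q" using P T Q by (simp add: assoc_mult_mat[of _ n n _ n _ n])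
    also have "\<dots> = P * (T * T) * Q" using P T Q simD by (simp add: assoc_mult_mat[of _ n n _ n _ n])
    finally show ?thesis .
  qed
  hence "mtrace (Z * Z) = mtrace ((T * T) * Q * P)"
    using mtrace_comm[of P n n "(T * T) * Q"] P T Q by (simp add: assoc_mult_mat[of _ n n _ n _ n])
  also have "\<dots> = mtrace (T * T)" using P T Q simD by (simp add: assoc_mult_mat[of _ n n _ n _ n])
  finally have trZ0: "mtrace (Z * Z) = 0" using trT by simp
  have "mtrace (Z * Z) = (\<Sum>i<n. \<Sum>k<n. Z $$ (i,k) * Z $$ (k,i))"
    using Z unfolding mtrace_def by (auto simp: scalar_prod_sum intro!: sum.cong)
  also have "\<dots> = complex_of_real (\<Sum>i<n. \<Sum>k<n. (cmod (Z $$ (i,k)))^2)"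
    unfolding of_real_sum
  proof (intro sum.cong refl)
    fix i k assume "i \<in> {..<n}" "k \<in> {..<n}"
    then have "Z $$ (k,i) = cnj (Z $$ (i,k))" using Z adj_index(1)[of k Z i] h by auto
    then show "Z $$ (i,k) * Z $$ (k,i) = complex_of_real ((cmod (Z $$ (i,k)))^2)"
      unfolding cmod_sq_cnj by (simp add: mult.commute)
  qed
  finally have "(\<Sum>i<n. \<Sum>k<n. (cmod (Z $$ (i,k)))^2) = 0" using trZ0 of_real_eq_0_iff by metis
  hence "\<forall>i\<in>{..<n}. (\<Sum>k<n. (cmod (Z $$ (i,k)))^2) = 0"
    by (subst (asm) sum_nonneg_eq_0_iff) (auto intro: sum_nonneg)
  hence "\<forall>i<n. \<forall>k<n. (cmod (Z $$ (i,k)))^2 = 0"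
    by (auto simp: sum_nonneg_eq_0_iff)
  hence "Z = 0\<^sub>m n n" using Z by (intro eq_matI) auto
  with nz show False by simp
qed


lemma cinner_mult: assumes A: "A \<in> carrier_mat n m" and u: "u \<in> carrier_vec n" and v: "v \<in> carrier_vec m"
  shows "cinner u (A *\<^sub>v v) = cinner (adj A *\<^sub>v u) v"
proof -
  have "cinner u (A *\<^sub>v v) = (\<Sum>a<n. cnj (u$a) * (\<Sum>b<m. A $$ (a,b) * v$b))"
    unfolding cinner_def using A u v by (auto simp: scalar_prod_sum intro!: sum.cong)
  also have "\<dots> = (\<Sum>a<n. \<Sum>b<m. cnj (u$a) * A $$ (a,b) * v$b)"
    by (simp add: sum_distrib_left mult.assoc)
  also have "\<dots> = (\<Sum>b<m. \<Sum>a<n. cnj (u$a) * A $$ (a,b) * v$b)"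
    by (rule sum.swap)
  also have "\<dots> = (\<Sum>b<m. cnj (\<Sum>a<n. cnj (A $$ (a,b)) * u$a) * v$b)"
    by (simp add: sum_distrib_right sum_distrib_left mult_ac)
  also have "\<dots> = cinner (adj A *\<^sub>v u) v"
    unfolding cinner_def using A u v by (auto simp: scalar_prod_sum intro!: sum.cong)
  finally show ?thesis .
qed

lemma cmod_sq_cnj': "(complex_of_real (cmod z))^2 = cnj z * z"
  using cmod_sq_cnj by simp

lemma cinner_self: "cinner v v = complex_of_real (cnsq v)"
  unfolding cinner_def cnsq_def of_real_sum by (intro sum.cong refl) (simp add: cmod_sq_cnj')

lemma cnsq_nonneg: "cnsq v \<ge> 0"
  unfolding cnsq_def by (intro sum_nonneg) auto

lemma cnsq_zero: assumes "v \<in> carrier_vec n" "cnsq v = 0" shows "v = 0\<^sub>v n"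
proof -
  have "\<forall>a\<in>{..<n}. (cmod (v$a))^2 = 0"
    using assms unfolding cnsq_def by (subst (asm) sum_nonneg_eq_0_iff) auto
  then show ?thesis using assms by (intro eq_vecI) auto
qed

lemma cinner_swap: assumes "u \<in> carrier_vec n" "v \<in> carrier_vec n"
  shows "cinner v u = cnj (cinner u v)"
  unfolding cinner_def using assms by (simp add: mult.commute)

lemma cinner_smult_r: "cinner u (c \<cdot>\<^sub>v v) = c * cinner u v"
  unfolding cinner_def by (simp add: sum_distrib_left mult.commute mult.left_commute)

lemma cinner_smult_l: assumes "u \<in> carrier_vec n" "v \<in> carrier_vec n"
  shows "cinner (c \<cdot>\<^sub>v u) v = cnj c * cinner u v"
  unfolding cinner_def using assms by (simp add: sum_distrib_left mult.commute mult.left_commute)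

definition orthonormal :: "nat \<Rightarrow> complex vec list \<Rightarrow> bool" where
  "orthonormal n vs \<longleftrightarrow> (\<forall>i<length vs. vs!i \<in> carrier_vec n) \<and>
     (\<forall>i<length vs. \<forall>j<length vs. cinner (vs!i) (vs!j) = (if i = j then 1 else 0))"

definition proj :: "nat \<Rightarrow> complex vec list \<Rightarrow> complex vec \<Rightarrow> complex vec" where
  "proj n vs w = vec n (\<lambda>a. w$a - (\<Sum>i<length vs. cinner (vs!i) w * (vs!i)$a))"

definition Prm :: "nat \<Rightarrow> complex vec list \<Rightarrow> complex mat" where
  "Prm n vs = mat n n (\<lambda>(a,b). (if a = b then 1 else 0) - (\<Sum>i<length vs. (vs!i)$a * cnj ((vs!i)$b)))"

lemma Prm_carrier[simp]: "Prm n vs \<in> carrier_mat n n"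
  unfolding Prm_def by simp

lemma proj_carrier[simp]: "proj n vs w \<in> carrier_vec n"
  unfolding proj_def by simp

lemma Prm_mult: assumes w: "w \<in> carrier_vec n" and o: "orthonormal n vs"
  shows "Prm n vs *\<^sub>v w = proj n vs w"
proof (rule eq_vecI)
  fix a assume a: "a < dim_vec (proj n vs w)"
  then have a: "a < n" by (simp add: proj_def)
  have "(Prm n vs *\<^sub>v w) $ a = (\<Sum>b<n. ((if a = b then 1 else 0) - (\<Sum>i<length vs. (vs!i)$a * cnj ((vs!i)$b))) * w$b)"
    using a w unfolding Prm_def by (auto simp: scalar_prod_sum intro!: sum.cong)
  also have "\<dots> = (\<Sum>b<n. (if a = b then 1 else 0) * w$b) - (\<Sum>b<n. \<Sum>i<length vs. (vs!i)$a * cnj ((vs!i)$b) * w$b)"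
    by (simp add: left_diff_distrib sum_subtractf sum_distrib_right)
  also have "(\<Sum>b<n. (if a = b then 1 else 0) * w$b) = w $ a"
  proof -
    have "(\<Sum>b<n. (if a = b then 1 else 0) * w$b) = (\<Sum>b<n. if b = a then w$b else 0)"
      by (rule sum.cong) auto
    then show ?thesis using a by simp
  qed
  also have "(\<Sum>b<n. \<Sum>i<length vs. (vs!i)$a * cnj ((vs!i)$b) * w$b) = (\<Sum>i<length vs. cinner (vs!i) w * (vs!i)$a)"
    apply (subst sum.swap)
    using w unfolding cinner_def by (auto simp: sum_distrib_right sum_distrib_left mult_ac intro!: sum.cong)
  finally show "(Prm n vs *\<^sub>v w) $ a = proj n vs w $ a" using a unfolding proj_def by simp
qed (simp add: proj_def Prm_def)

lemma Prm_adj: "adj (Prm n vs) = Prm n vs"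
  unfolding Prm_def by (rule eq_matI) (auto simp: mult.commute)

lemma proj_orth: assumes w: "w \<in> carrier_vec n" and o: "orthonormal n vs" and j: "j < length vs"
  shows "cinner (vs!j) (proj n vs w) = 0"
proof -
  let ?c = "\<lambda>i. cinner (vs!i) w"
  have vj: "vs!j \<in> carrier_vec n" using o j unfolding orthonormal_def by auto
  have "cinner (vs!j) (proj n vs w) = (\<Sum>a<n. cnj ((vs!j)$a) * w$a) - (\<Sum>a<n. \<Sum>i<length vs. ?c i * (cnj ((vs!j)$a) * (vs!i)$a))"
    unfolding cinner_def proj_def by (simp add: right_diff_distrib sum_subtractf sum_distrib_left mult.commute mult.left_commute)
  also have "(\<Sum>a<n. cnj ((vs!j)$a) * w$a) = ?c j" using w unfolding cinner_def by simp
  also have "(\<Sum>a<n. \<Sum>i<length vs. ?c i * (cnj ((vs!j)$a) * (vs!i)$a)) = (\<Sum>i<length vs. ?c i * cinner (vs!j) (vs!i))"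
    apply (subst sum.swap)
    using o unfolding orthonormal_def cinner_def by (auto simp: sum_distrib_left intro!: sum.cong)
  also have "\<dots> = (\<Sum>i<length vs. if i = j then ?c i else 0)"
    using o j unfolding orthonormal_def by (intro sum.cong refl) auto
  also have "\<dots> = ?c j" using j by simp
  finally show ?thesis by simp
qed

lemma proj_id: assumes u: "u \<in> carrier_vec n" and perp: "\<forall>j<length vs. cinner (vs!j) u = 0"
  shows "proj n vs u = u"
  using u perp unfolding proj_def by (intro eq_vecI) auto

lemma Prm_trace: assumes o: "orthonormal n vs"
  shows "mtrace (Prm n vs) = of_nat n - of_nat (length vs)"
proof -
  have "mtrace (Prm n vs) = (\<Sum>a<n. 1 - (\<Sum>i<length vs. (vs!i)$a * cnj ((vs!i)$a)))"
    unfolding mtrace_def Prm_def by simp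
  also have "\<dots> = of_nat n - (\<Sum>i<length vs. \<Sum>a<n. cnj ((vs!i)$a) * (vs!i)$a)"
    by (subst sum.swap) (simp add: sum_subtractf mult.commute)
  also have "(\<Sum>i<length vs. \<Sum>a<n. cnj ((vs!i)$a) * (vs!i)$a) = (\<Sum>i<length vs. cinner (vs!i) (vs!i))"
    using o unfolding orthonormal_def cinner_def by (intro sum.cong refl) auto
  also have "\<dots> = (\<Sum>i<length vs. 1)"
    using o unfolding orthonormal_def by (intro sum.cong refl) auto
  finally show ?thesis by simp
qed


lemma herm_step: assumes A: "A \<in> carrier_mat n n" and h: "adj A = A" and o: "orthonormal n vs"
  and k: "length vs < n" and ev: "\<forall>i<length vs. A *\<^sub>v (vs!i) = lam i \<cdot>\<^sub>v (vs!i)"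
  shows "\<exists>u \<mu>. u \<in> carrier_vec n \<and> cinner u u = 1 \<and> (\<forall>j<length vs. cinner (vs!j) u = 0) \<and> A *\<^sub>v u = \<mu> \<cdot>\<^sub>v u"
proof -
  define P where "P = Prm n vs"
  define Z where "Z = P * A * P"
  have P: "P \<in> carrier_mat n n" unfolding P_def by simp
  have Z: "Z \<in> carrier_mat n n" unfolding Z_def using P A by simp
  have vsc: "vs!j \<in> carrier_vec n" if "j < length vs" for j using o that unfolding orthonormal_def by auto
  have Pm: "P *\<^sub>v y = proj n vs y" if "y \<in> carrier_vec n" for y
    unfolding P_def using Prm_mult[OF that o] .
  have Zu_eq: "Z *\<^sub>v y = P *\<^sub>v (A *\<^sub>v (P *\<^sub>v y))" if y: "y \<in> carrier_vec n" for y
  proof -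
    have "Z *\<^sub>v y = (P * A) *\<^sub>v (P *\<^sub>v y)" unfolding Z_def
      using assoc_mult_mat_vec[of "P * A" n n P n y] P A y by simp
    also have "\<dots> = P *\<^sub>v (A *\<^sub>v (P *\<^sub>v y))"
      using assoc_mult_mat_vec[of P n n A n "P *\<^sub>v y"] P A y by simp
    finally show ?thesis .
  qed
  have hZ: "adj Z = Z"
  proof -
    have "adj Z = adj P * adj (P * A)" unfolding Z_def
      by (rule adj_mult[of "P * A" n n P n]) (use P A in auto)
    also have "\<dots> = P * A * P" using P A h unfolding P_def
      using assoc_mult_mat[of "adj (Prm n vs)" n n "adj A" n "adj (Prm n vs)" n]
      by (simp add: adj_mult[of _ n n _ n] Prm_adj)
    also have "\<dots> = Z" unfolding Z_def by simp
    finally show ?thesis .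
  qed
  have K: "Z *\<^sub>v u = A *\<^sub>v u" if u: "u \<in> carrier_vec n" and perp: "\<forall>j<length vs. cinner (vs!j) u = 0" for u
  proof -
    have Pu: "P *\<^sub>v u = u" unfolding P_def using Prm_mult[OF u o] proj_id[OF u perp] by simp
    have perpA: "\<forall>j<length vs. cinner (vs!j) (A *\<^sub>v u) = 0"
    proof (intro allI impI)
      fix j assume j: "j < length vs"
      have "cinner (vs!j) (A *\<^sub>v u) = cinner (adj A *\<^sub>v (vs!j)) u" using cinner_mult[OF A vsc[OF j] u] .
      also have "\<dots> = cinner (lam j \<cdot>\<^sub>v (vs!j)) u" using h ev j by simp
      also have "\<dots> = cnj (lam j) * cinner (vs!j) u" using cinner_smult_l[OF vsc[OF j] u] .
      finally show "cinner (vs!j) (A *\<^sub>v u) = 0" using perp j by simp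
    qed
    have "Z *\<^sub>v u = P *\<^sub>v (A *\<^sub>v (P *\<^sub>v u))" using Zu_eq[OF u] .
    also have "\<dots> = P *\<^sub>v (A *\<^sub>v u)" using Pu by simp
    also have "\<dots> = A *\<^sub>v u"
      using Pm[of "A *\<^sub>v u"] proj_id[of "A *\<^sub>v u" n vs] perpA A u by simp
    finally show ?thesis .
  qed
  have "\<exists>u \<mu>. u \<in> carrier_vec n \<and> u \<noteq> 0\<^sub>v n \<and> (\<forall>j<length vs. cinner (vs!j) u = 0) \<and> A *\<^sub>v u = \<mu> \<cdot>\<^sub>v u"
  proof (cases "Z = 0\<^sub>m n n")
    case False
    from herm_nonzero_ev[OF Z hZ False] obtain \<mu> where mu0: "\<mu> \<noteq> 0" and "eigenvalue Z \<mu>" by auto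
    then obtain u where u: "u \<in> carrier_vec n" "u \<noteq> 0\<^sub>v n" and Zu: "Z *\<^sub>v u = \<mu> \<cdot>\<^sub>v u"
      unfolding eigenvalue_def eigenvector_def using Z by auto
    have "u = (1 / \<mu>) \<cdot>\<^sub>v (Z *\<^sub>v u)" using Zu mu0 u by (auto simp: smult_smult_assoc)
    also have "Z *\<^sub>v u = P *\<^sub>v (A *\<^sub>v (P *\<^sub>v u))" using Zu_eq[OF u(1)] .
    also have "\<dots> = proj n vs (A *\<^sub>v (P *\<^sub>v u))"
      using Pm[of "A *\<^sub>v (P *\<^sub>v u)"] A P u by simp
    finally have ueq: "u = (1 / \<mu>) \<cdot>\<^sub>v proj n vs (A *\<^sub>v (P *\<^sub>v u))" .
    have perp: "\<forall>j<length vs. cinner (vs!j) u = 0"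
    proof (intro allI impI)
      fix j assume j: "j < length vs"
      have "cinner (vs!j) u = (1 / \<mu>) * cinner (vs!j) (proj n vs (A *\<^sub>v (P *\<^sub>v u)))"
        by (subst ueq) (rule cinner_smult_r)
      also have "\<dots> = 0" using proj_orth[OF _ o j, of "A *\<^sub>v (P *\<^sub>v u)"] A P u by simp
      finally show "cinner (vs!j) u = 0" .
    qed
    have "A *\<^sub>v u = \<mu> \<cdot>\<^sub>v u" using K[OF u(1) perp] Zu by simp
    then show ?thesis using u perp by blast
  next
    case True
    have "mtrace P \<noteq> 0" unfolding P_def using Prm_trace[OF o] k by simp
    then obtain a where a: "a < n" and Paa: "P $$ (a,a) \<noteq> 0"
      unfolding mtrace_def using P by (metis (no_types, lifting) carrier_matD(1) lessThan_iff sum.neutral)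
    define u where "u = P *\<^sub>v unit_vec n a"
    have u: "u \<in> carrier_vec n" unfolding u_def using P by simp
    have "u $ a = P $$ (a,a)" unfolding u_def using P a by simp
    then have u0: "u \<noteq> 0\<^sub>v n" using Paa a by auto
    have perp: "\<forall>j<length vs. cinner (vs!j) u = 0"
      unfolding u_def P_def using Prm_mult[OF _ o, of "unit_vec n a"] proj_orth[OF _ o, of "unit_vec n a"] by simp
    have "A *\<^sub>v u = Z *\<^sub>v u" using K[OF u perp] by simp
    also have "\<dots> = 0 \<cdot>\<^sub>v u" using True u by (auto simp: eq_vecI)
    finally show ?thesis using u u0 perp by blast
  qed
  then obtain u \<mu> where u: "u \<in> carrier_vec n" "u \<noteq> 0\<^sub>v n" and perp: "\<forall>j<length vs. cinner (vs!j) u = 0"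
    and Au: "A *\<^sub>v u = \<mu> \<cdot>\<^sub>v u" by blast
  have r: "cnsq u > 0" using cnsq_zero[OF u(1)] u(2) cnsq_nonneg[of u] by force
  define c where "c = complex_of_real (1 / sqrt (cnsq u))"
  define u' where "u' = c \<cdot>\<^sub>v u"
  have u': "u' \<in> carrier_vec n" unfolding u'_def using u by simp
  have "cinner u' u' = cnj c * (c * cinner u u)" unfolding u'_def
    using cinner_smult_l[of u n "c \<cdot>\<^sub>v u" c] cinner_smult_r[of u c u] u by simp
  also have "\<dots> = 1" unfolding c_def cinner_self using r
    by (simp add: of_real_mult[symmetric] del: of_real_mult)
  finally have n1: "cinner u' u' = 1" .
  have perp': "\<forall>j<length vs. cinner (vs!j) u' = 0" unfolding u'_def using perp by (simp add: cinner_smult_r)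
  have "A *\<^sub>v u' = \<mu> \<cdot>\<^sub>v u'" unfolding u'_def using Au A u
    by (simp add: mult_mat_vec smult_smult_assoc mult.commute)
  then show ?thesis using u' n1 perp' by blast
qed


lemma herm_eigen_list: assumes A: "A \<in> carrier_mat n n" and h: "adj A = A"
  shows "k \<le> n \<Longrightarrow> \<exists>vs lam. length vs = k \<and> orthonormal n vs \<and> (\<forall>i<k. A *\<^sub>v (vs!i) = lam i \<cdot>\<^sub>v (vs!i))"
proof (induction k)
  case 0
  then show ?case by (auto simp: orthonormal_def)
next
  case (Suc k)
  then obtain vs lam where len: "length vs = k" and o: "orthonormal n vs"
    and ev: "\<forall>i<k. A *\<^sub>v (vs!i) = lam i \<cdot>\<^sub>v (vs!i)" by auto
  from herm_step[OF A h o, of lam] len ev Suc.prems obtain u \<mu> where u: "u \<in> carrier_vec n"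
    and u1: "cinner u u = 1" and perp: "\<forall>j<length vs. cinner (vs!j) u = 0" and Au: "A *\<^sub>v u = \<mu> \<cdot>\<^sub>v u"
    by auto
  have vsc: "vs!j \<in> carrier_vec n" if "j < length vs" for j using o that unfolding orthonormal_def by auto
  define vs' where "vs' = vs @ [u]"
  have nth': "vs' ! i = (if i < k then vs ! i else u)" if "i < Suc k" for i
    using that len unfolding vs'_def by (auto simp: nth_append)
  have o': "orthonormal n vs'"
    unfolding orthonormal_def
  proof (intro conjI allI impI)
    fix i assume "i < length vs'"
    then show "vs'!i \<in> carrier_vec n" using nth'[of i] vsc u len unfolding vs'_def by auto
  next
    fix i j assume i: "i < length vs'" and j: "j < length vs'"
    then have i': "i < Suc k" and j': "j < Suc k" using len unfolding vs'_def by auto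
    show "cinner (vs'!i) (vs'!j) = (if i = j then 1 else 0)"
    proof (cases "i < k")
      case True
      note iT = True
      show ?thesis
      proof (cases "j < k")
        case True then show ?thesis using iT o len nth'[OF i'] nth'[OF j'] unfolding orthonormal_def by auto
      next
        case False then show ?thesis using iT perp len nth'[OF i'] nth'[OF j'] by auto
      qed
    next
      case False
      note iF = False
      show ?thesis
      proof (cases "j < k")
        case True
        have "cinner u (vs!j) = cnj (cinner (vs!j) u)" using cinner_swap[OF vsc u] True len by auto
        then show ?thesis using iF True perp len nth'[OF i'] nth'[OF j'] by auto
      next
        case False then show ?thesis using iF u1 i' j' nth'[OF i'] nth'[OF j'] by auto
      qed
    qed
  qed
  have ev': "\<forall>i<Suc k. A *\<^sub>v (vs'!i) = (lam(k := \<mu>)) i \<cdot>\<^sub>v (vs'!i)"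
    using ev Au nth' by auto
  show ?case using o' ev' len unfolding vs'_def by (intro exI[of _ "vs @ [u]"] exI[of _ "lam(k := \<mu>)"]) auto
qed

definition dmat :: "nat \<Rightarrow> (nat \<Rightarrow> complex) \<Rightarrow> complex mat" where
  "dmat n lam = mat n n (\<lambda>(i,j). if i = j then lam i else 0)"

lemma herm_spectral: assumes A: "A \<in> carrier_mat n n" and h: "adj A = A"
  shows "\<exists>V lam. V \<in> carrier_mat n n \<and> adj V * V = 1\<^sub>m n \<and> V * adj V = 1\<^sub>m n \<and> A * V = V * dmat n lam"
proof -
  obtain vs lam where len: "length vs = n" and o: "orthonormal n vs" and ev: "\<forall>i<n. A *\<^sub>v (vs!i) = lam i \<cdot>\<^sub>v (vs!i)"
    using herm_eigen_list[OF A h le_refl] by auto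
  define V where "V = mat_of_cols n vs"
  have V: "V \<in> carrier_mat n n" unfolding V_def using len by (metis mat_of_cols_carrier(1))
  have vsc: "vs!j \<in> carrier_vec n" if "j < n" for j using o that len unfolding orthonormal_def by auto
  have colV: "col V j = vs ! j" if "j < n" for j unfolding V_def using col_mat_of_cols[of j vs n] that len vsc by auto
  have VV: "adj V * V = 1\<^sub>m n"
  proof (rule eq_matI)
    fix i j assume "i < dim_row (1\<^sub>m n :: complex mat)" "j < dim_col (1\<^sub>m n :: complex mat)"
    then have i: "i < n" and j: "j < n" by auto
    have "(adj V * V) $$ (i,j) = (\<Sum>a<n. cnj (V $$ (a,i)) * V $$ (a,j))"
      using V i j by (simp add: scalar_prod_sum)
    also have "\<dots> = cinner (vs!i) (vs!j)" unfolding cinner_def using vsc[OF j] vsc[OF i] i j len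
      by (intro sum.cong) (auto simp: V_def mat_of_cols_index)
    also have "\<dots> = 1\<^sub>m n $$ (i,j)" using o i j len unfolding orthonormal_def by auto
    finally show "(adj V * V) $$ (i,j) = 1\<^sub>m n $$ (i,j)" .
  qed (use V in auto)
  have VV': "V * adj V = 1\<^sub>m n" using mat_mult_left_right_inverse[of "adj V" n V] VV V by simp
  have AV: "A * V = V * dmat n lam"
  proof (rule eq_matI)
    fix i j assume "i < dim_row (V * dmat n lam)" "j < dim_col (V * dmat n lam)"
    then have i: "i < n" and j: "j < n" using V by (auto simp: dmat_def)
    have "(A * V) $$ (i,j) = (A *\<^sub>v col V j) $ i" using A V i j by simp
    also have "\<dots> = lam j * (vs!j) $ i" using colV[OF j] ev j i vsc[OF j] by simp
    also have "\<dots> = (\<Sum>k<n. V $$ (i,k) * (if k = j then lam k else 0))"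
    proof -
      have "(\<Sum>k<n. V $$ (i,k) * (if k = j then lam k else 0)) = (\<Sum>k<n. if k = j then V $$ (i,k) * lam k else 0)"
        by (intro sum.cong) auto
      also have "\<dots> = V $$ (i,j) * lam j" using j by simp
      finally show ?thesis using i j len by (simp add: V_def mat_of_cols_index mult.commute)
    qed
    also have "\<dots> = (V * dmat n lam) $$ (i,j)" using V i j by (simp add: scalar_prod_sum dmat_def)
    finally show "(A * V) $$ (i,j) = (V * dmat n lam) $$ (i,j)" .
  qed (use V A in \<open>auto simp: dmat_def\<close>)
  show ?thesis using V VV VV' AV by blast
qed


lemma cauchy_schwarz_c: assumes "u \<in> carrier_vec n" "v \<in> carrier_vec n"
  shows "cmod (cinner u v) \<le> sqrt (cnsq u) * sqrt (cnsq v)"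
proof -
  have "cmod (cinner u v) \<le> (\<Sum>a<n. cmod (cnj (u$a) * v$a))"
    unfolding cinner_def using assms by (simp add: norm_sum)
  also have "\<dots> = (\<Sum>a<n. \<bar>cmod (u$a)\<bar> * \<bar>cmod (v$a)\<bar>)" by (simp add: norm_mult)
  also have "\<dots> \<le> L2_set (\<lambda>a. cmod (u$a)) {..<n} * L2_set (\<lambda>a. cmod (v$a)) {..<n}"
    by (rule L2_set_mult_ineq)
  also have "\<dots> = sqrt (cnsq u) * sqrt (cnsq v)" unfolding L2_set_def cnsq_def using assms by simp
  finally show ?thesis .
qed

lemma unitary_coords: assumes V: "V \<in> carrier_mat n n" and VV: "V * adj V = 1\<^sub>m n" and u: "u \<in> carrier_vec n"
  shows "u = V *\<^sub>v (adj V *\<^sub>v u)" and "\<And>i. i < n \<Longrightarrow> (adj V *\<^sub>v u) $ i = cinner (col V i) u"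
proof -
  show "u = V *\<^sub>v (adj V *\<^sub>v u)" using assoc_mult_mat_vec[of V n n "adj V" n u] V u VV by simp
  fix i assume i: "i < n"
  show "(adj V *\<^sub>v u) $ i = cinner (col V i) u"
    unfolding cinner_def using V u i by (simp add: scalar_prod_sum)
qed

lemma unitary_quad: assumes V: "V \<in> carrier_mat n n" and VV: "adj V * V = 1\<^sub>m n" and VV': "V * adj V = 1\<^sub>m n"
  and A: "A \<in> carrier_mat n n" and AV: "A * V = V * dmat n lam" and u: "u \<in> carrier_vec n"
  shows "cinner u (A *\<^sub>v u) = (\<Sum>i<n. lam i * complex_of_real ((cmod (cinner (col V i) u))^2))"
proof -
  define y where "y = adj V *\<^sub>v u"
  have y: "y \<in> carrier_vec n" unfolding y_def carrier_vec_def using V by simp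
  have uy: "u = V *\<^sub>v y" unfolding y_def using unitary_coords(1)[OF V VV' u] .
  have D: "dmat n lam \<in> carrier_mat n n" by (simp add: dmat_def)
  have "A *\<^sub>v u = V *\<^sub>v (dmat n lam *\<^sub>v y)"
    using uy assoc_mult_mat_vec[of A n n V n y] assoc_mult_mat_vec[of V n n "dmat n lam" n y] AV A V y D by simp
  then have "cinner u (A *\<^sub>v u) = cinner (adj V *\<^sub>v u) (dmat n lam *\<^sub>v y)"
    using cinner_mult[of V n n u "dmat n lam *\<^sub>v y"] V u D y by simp
  also have "\<dots> = (\<Sum>i<n. cnj (y$i) * (lam i * y$i))"
    unfolding cinner_def y_def[symmetric] using y
    by (intro sum.cong) (auto simp: dmat_def scalar_prod_sum if_distrib[where f="\<lambda>x. x * _"] cong: if_cong)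
  also have "\<dots> = (\<Sum>i<n. lam i * complex_of_real ((cmod (cinner (col V i) u))^2))"
  proof (intro sum.cong refl)
    fix i assume "i \<in> {..<n}"
    then have "y $ i = cinner (col V i) u" unfolding y_def using unitary_coords(2)[OF V VV' u] by simp
    then show "cnj (y$i) * (lam i * y$i) = lam i * complex_of_real ((cmod (cinner (col V i) u))^2)"
      by (simp add: cmod_sq_cnj' mult_ac)
  qed
  finally show ?thesis .
qed

lemma unitary_parseval: assumes V: "V \<in> carrier_mat n n" and VV: "adj V * V = 1\<^sub>m n" and VV': "V * adj V = 1\<^sub>m n"
  and u: "u \<in> carrier_vec n"
  shows "cnsq u = (\<Sum>i<n. (cmod (cinner (col V i) u))^2)"
proof -
  have "1\<^sub>m n * V = V * dmat n (\<lambda>_. 1)" using V by (intro eq_matI) (auto simp: dmat_def scalar_prod_sum if_distrib[where f="\<lambda>x. _ * x"] cong: if_cong)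
  from unitary_quad[OF V VV VV' _ this u] have "cinner u u = complex_of_real (\<Sum>i<n. (cmod (cinner (col V i) u))^2)"
    using u by simp
  then show ?thesis unfolding cinner_self of_real_eq_iff .
qed

lemma unitary_trace: assumes V: "V \<in> carrier_mat n n" and VV': "V * adj V = 1\<^sub>m n" and Z: "Z \<in> carrier_mat n n"
  shows "mtrace Z = (\<Sum>i<n. cinner (col V i) (Z *\<^sub>v col V i))"
proof -
  have "mtrace Z = mtrace ((Z * V) * adj V)" using assoc_mult_mat[of Z n n V n "adj V" n] Z V VV' by simp
  also have "\<dots> = mtrace (adj V * (Z * V))" using mtrace_comm[of "Z * V" n n "adj V"] Z V by simp
  also have "\<dots> = (\<Sum>i<n. cinner (col V i) (Z *\<^sub>v col V i))"
    unfolding mtrace_def cinner_def using Z V by (auto simp: scalar_prod_sum intro!: sum.cong)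
  finally show ?thesis .
qed

lemma dmat_char_poly: "char_poly (dmat n lam) = (\<Prod>a\<leftarrow>map lam [0..<n]. [:- a, 1:])"
proof -
  have D: "dmat n lam \<in> carrier_mat n n" by (simp add: dmat_def)
  have ut: "upper_triangular (dmat n lam)" unfolding upper_triangular_def dmat_def by auto
  have dg: "diag_mat (dmat n lam) = map lam [0..<n]" unfolding diag_mat_def dmat_def by auto
  show ?thesis using char_poly_upper_triangular[OF D ut] dg by simp
qed

lemma unitary_char_poly: assumes V: "V \<in> carrier_mat n n" and VV: "adj V * V = 1\<^sub>m n" and VV': "V * adj V = 1\<^sub>m n"
  and A: "A \<in> carrier_mat n n" and AV: "A * V = V * dmat n lam"
  shows "char_poly A = (\<Prod>a\<leftarrow>map lam [0..<n]. [:- a, 1:])"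
proof -
  have D: "dmat n lam \<in> carrier_mat n n" by (simp add: dmat_def)
  have "A = (A * V) * adj V" using assoc_mult_mat[of A n n V n "adj V" n] A V VV' by simp
  also have "\<dots> = V * dmat n lam * adj V" using AV by simp
  finally have "similar_mat_wit A (dmat n lam) V (adj V)"
    unfolding similar_mat_wit_def using A V D VV VV' by (auto simp: Let_def)
  then have "similar_mat A (dmat n lam)" unfolding similar_mat_def by blast
  then show ?thesis using char_poly_similar dmat_char_poly by metis
qed

lemma map_poly_of_real_prod: "map_poly complex_of_real (\<Prod>a\<leftarrow>xs. [:- a, 1:]) = (\<Prod>a\<leftarrow>map complex_of_real xs. [:- a, 1:])"
proof -
  interpret mp: map_poly_comm_ring_hom "complex_of_real" ..
  show ?thesis
  proof (induction xs)
    case (Cons a xs)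
    have "map_poly complex_of_real (\<Prod>a\<leftarrow>a # xs. [:- a, 1:]) =
      map_poly complex_of_real [:- a, 1:] * map_poly complex_of_real (\<Prod>a\<leftarrow>xs. [:- a, 1:])"
      by (simp only: prod_list.Cons list.map mp.hom_mult)
    also have "map_poly complex_of_real [:- a, 1:] = [:- complex_of_real a, 1:]" by simp
    finally show ?case using Cons by simp
  qed simp
qed
lemma map_poly_of_real_inj: "map_poly complex_of_real p = map_poly complex_of_real q \<Longrightarrow> p = q"
  by (metis of_real_hom.coeff_map_poly_hom of_real_eq_iff poly_eqI)

lemma col_orth: assumes V: "V \<in> carrier_mat n n" and VV: "adj V * V = 1\<^sub>m n" and i: "i < n" and j: "j < n"
  shows "cinner (col V i) (col V j) = (if i = j then 1 else 0)"
proof -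
  have "cinner (col V i) (col V j) = (adj V * V) $$ (i,j)"
    unfolding cinner_def using V i j by (simp add: scalar_prod_sum)
  then show ?thesis using VV i j by simp
qed

lemma proots_lin_prod: "proots (\<Prod>a\<leftarrow>xs. [:- a, 1:]) = mset xs"
proof -
  have z: "0 \<notin> set (map (\<lambda>a. [:- a, 1:]) xs)" by auto
  have "sum_list (map proots (map (\<lambda>a. [:- a, 1:]) xs)) = mset xs" by (induction xs) auto
  then show ?thesis using proots_prod_list[OF z] by simp
qed

abbreviation cmat :: "real mat \<Rightarrow> complex mat" where "cmat X \<equiv> map_mat complex_of_real X"

lemma adj_cmat: "adj (cmat X) = cmat (transpose_mat X)"
proof (rule eq_matI)
  fix i j assume "i < dim_row (cmat (transpose_mat X))" "j < dim_col (cmat (transpose_mat X))"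
  then show "adj (cmat X) $$ (i, j) = cmat (transpose_mat X) $$ (i, j)" by simp
qed simp_all

lemma real_sv: assumes X: "X \<in> carrier_mat n n"
  shows "\<exists>V d. V \<in> carrier_mat n n \<and> adj V * V = 1\<^sub>m n \<and> V * adj V = 1\<^sub>m n
     \<and> (\<forall>i<n. d i = cnsq (cmat X *\<^sub>v col V i))
     \<and> singular_values X = mset (map (\<lambda>i. sqrt (d i)) [0..<n])
     \<and> (\<forall>u\<in>carrier_vec n. cnsq (cmat X *\<^sub>v u) = (\<Sum>i<n. d i * (cmod (cinner (col V i) u))^2))"
proof -
  define S where "S = transpose_mat X * X"
  have S: "S \<in> carrier_mat n n" unfolding S_def using X by simp
  have Xc: "cmat X \<in> carrier_mat n n" using X by simp
  have Sc: "cmat S = adj (cmat X) * cmat X"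
    unfolding S_def adj_cmat using of_real_hom.mat_hom_mult[of "transpose_mat X" n n X n] X by simp
  have ScC: "cmat S \<in> carrier_mat n n" using S by simp
  have hS: "adj (cmat S) = cmat S" unfolding Sc using adj_mult[of "adj (cmat X)" n n "cmat X" n] Xc by simp
  obtain V lam where V: "V \<in> carrier_mat n n" and VV: "adj V * V = 1\<^sub>m n" and VV': "V * adj V = 1\<^sub>m n"
    and SV: "cmat S * V = V * dmat n lam" using herm_spectral[OF ScC hS] by blast
  define d where "d i = cnsq (cmat X *\<^sub>v col V i)" for i
  have quadS: "cinner u (cmat S *\<^sub>v u) = complex_of_real (cnsq (cmat X *\<^sub>v u))" if u: "u \<in> carrier_vec n" for u
  proof -
    have "cmat S *\<^sub>v u = adj (cmat X) *\<^sub>v (cmat X *\<^sub>v u)" unfolding Sc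
      using assoc_mult_mat_vec[of "adj (cmat X)" n n "cmat X" n u] Xc u by simp
    then have "cinner u (cmat S *\<^sub>v u) = cinner (cmat X *\<^sub>v u) (cmat X *\<^sub>v u)"
      using cinner_mult[of "adj (cmat X)" n n u "cmat X *\<^sub>v u"] Xc u by simp
    then show ?thesis unfolding cinner_self .
  qed
  have lam: "lam i = complex_of_real (d i)" if i: "i < n" for i
  proof -
    have c: "col V i \<in> carrier_vec n" by (metis V carrier_matD(1) col_dim)
    have "cinner (col V i) (cmat S *\<^sub>v col V i) = (\<Sum>j<n. lam j * complex_of_real ((cmod (cinner (col V j) (col V i)))^2))"
      using unitary_quad[OF V VV VV' ScC SV c] .
    also have "\<dots> = (\<Sum>j<n. if j = i then lam j else 0)"
      using col_orth[OF V VV] i by (intro sum.cong refl) auto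
    also have "\<dots> = lam i" using i by simp
    finally show ?thesis using quadS[OF c] unfolding d_def by simp
  qed
  have "char_poly (cmat S) = (\<Prod>a\<leftarrow>map lam [0..<n]. [:- a, 1:])"
    using unitary_char_poly[OF V VV VV' ScC SV] .
  also have "map lam [0..<n] = map complex_of_real (map d [0..<n])" using lam by simp
  finally have "map_poly complex_of_real (char_poly S) = map_poly complex_of_real (\<Prod>a\<leftarrow>map d [0..<n]. [:- a, 1:])"
    unfolding map_poly_of_real_prod of_real_hom.char_poly_hom[OF S] .
  then have cpS: "char_poly S = (\<Prod>a\<leftarrow>map d [0..<n]. [:- a, 1:])" by (rule map_poly_of_real_inj)
  have sv: "singular_values X = mset (map (\<lambda>i. sqrt (d i)) [0..<n])"
    unfolding singular_values_def S_def[symmetric] cpS proots_lin_prod by (simp add: multiset.map_comp o_def)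
  have qf: "cnsq (cmat X *\<^sub>v u) = (\<Sum>i<n. d i * (cmod (cinner (col V i) u))^2)" if u: "u \<in> carrier_vec n" for u
  proof -
    have "complex_of_real (cnsq (cmat X *\<^sub>v u)) = (\<Sum>i<n. lam i * complex_of_real ((cmod (cinner (col V i) u))^2))"
      using quadS[OF u] unitary_quad[OF V VV VV' ScC SV u] by simp
    also have "\<dots> = complex_of_real (\<Sum>i<n. d i * (cmod (cinner (col V i) u))^2)"
      unfolding of_real_sum using lam by (intro sum.cong refl) simp
    finally show ?thesis unfolding of_real_eq_iff .
  qed
  show ?thesis
  proof -
    have dd: "\<forall>i<n. d i = cnsq (cmat X *\<^sub>v col V i)" unfolding d_def by simp
    show ?thesis
      apply (rule exI[of _ V], rule exI[of _ d])
      apply (intro conjI)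
           apply (fact V)
          apply (fact VV)
         apply (fact VV')
        apply (fact dd)
       apply (fact sv)
      using qf by blast
  qed
qed


lemma mtrace_cmat: assumes "A \<in> carrier_mat n n" shows "mtrace (cmat A) = complex_of_real (mtrace A)"
  unfolding mtrace_def of_real_sum using assms by (intro sum.cong) auto

lemma nuclear_norm_eq: assumes h: "singular_values X = mset (map (\<lambda>i. sqrt (d i)) [0..<n])"
  shows "nuclear_norm X = (\<Sum>i<n. sqrt (d i))"
proof -
  have "nuclear_norm X = sum_list (map (\<lambda>i. sqrt (d i)) [0..<n])"
    unfolding nuclear_norm_def h sum_mset_sum_list ..
  also have "\<dots> = sum (\<lambda>i. sqrt (d i)) (set [0..<n])" by (rule interv_sum_list_conv_sum_set_nat)
  also have "set [0..<n] = {..<n}" by auto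
  finally show ?thesis .
qed

lemma sigma_min_eq: "singular_values X = mset (map (\<lambda>i. sqrt (d i)) [0..<n]) \<Longrightarrow> sigma_min X = Min ((\<lambda>i. sqrt (d i)) ` {..<n})"
  unfolding sigma_min_def by (simp add: atLeast0LessThan)

lemma trace_bound: assumes X: "X \<in> carrier_mat n n" and M: "M \<in> carrier_mat n n" and W: "W \<in> carrier_mat n n"
  and WM: "W * M = 1\<^sub>m n" and n: "n > 0"
  shows "mtrace (X * W) \<le> nuclear_norm X / sigma_min M"
proof -
  obtain VM e where VM: "VM \<in> carrier_mat n n" and VMa: "adj VM * VM = 1\<^sub>m n" and VMb: "VM * adj VM = 1\<^sub>m n"
    and eM: "\<forall>i<n. e i = cnsq (cmat M *\<^sub>v col VM i)"
    and svM: "singular_values M = mset (map (\<lambda>i. sqrt (e i)) [0..<n])"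
    and qfM: "\<forall>u\<in>carrier_vec n. cnsq (cmat M *\<^sub>v u) = (\<Sum>i<n. e i * (cmod (cinner (col VM i) u))^2)"
    using real_sv[OF M] by blast
  obtain VX d where VX: "VX \<in> carrier_mat n n" and VXa: "adj VX * VX = 1\<^sub>m n" and VXb: "VX * adj VX = 1\<^sub>m n"
    and dX: "\<forall>i<n. d i = cnsq (cmat X *\<^sub>v col VX i)"
    and svX: "singular_values X = mset (map (\<lambda>i. sqrt (d i)) [0..<n])"
    using real_sv[OF X] by blast
  define s where "s = sigma_min M"
  have s_eq: "s = Min ((\<lambda>i. sqrt (e i)) ` {..<n})" unfolding s_def using sigma_min_eq[OF svM] .
  have Mc: "cmat M \<in> carrier_mat n n" and Wc: "cmat W \<in> carrier_mat n n" and Xc: "cmat X \<in> carrier_mat n n"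
    using M W X by auto
  have WMc: "cmat W * cmat M = 1\<^sub>m n"
    by (metis WM of_real_hom.mat_hom_mult[OF W M] of_real_hom.mat_hom_one)
  have MW: "M * W = 1\<^sub>m n" using mat_mult_left_right_inverse[OF W M WM] .
  have MWc: "cmat M * cmat W = 1\<^sub>m n"
    by (metis MW of_real_hom.mat_hom_mult[OF M W] of_real_hom.mat_hom_one)
  have MWv: "cmat M *\<^sub>v (cmat W *\<^sub>v z) = z" if z: "z \<in> carrier_vec n" for z
    using assoc_mult_mat_vec[OF Mc Wc z] MWc z by simp
  have WMv: "cmat W *\<^sub>v (cmat M *\<^sub>v z) = z" if z: "z \<in> carrier_vec n" for z
    using assoc_mult_mat_vec[OF Wc Mc z] WMc z by simp
  have colc: "col V i \<in> carrier_vec n" if "V \<in> carrier_mat n n" for V i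
    by (metis that carrier_matD(1) carrier_vecI col_dim)
  have epos: "e i > 0" if i: "i < n" for i
  proof -
    let ?w = "col VM i"
    have w: "?w \<in> carrier_vec n" using colc[OF VM] .
    have "cinner ?w ?w = 1" using col_orth[OF VM VMa i i] by simp
    have w0: "?w \<noteq> 0\<^sub>v n"
    proof
      assume "?w = 0\<^sub>v n"
      then have "cinner ?w ?w = 0" unfolding cinner_def by simp
      with \<open>cinner ?w ?w = 1\<close> show False by simp
    qed
    have W0: "cmat W *\<^sub>v 0\<^sub>v n = 0\<^sub>v n"
    proof (rule eq_vecI)
      fix j assume "j < dim_vec (0\<^sub>v n :: complex vec)"
      then show "(cmat W *\<^sub>v 0\<^sub>v n) $ j = 0\<^sub>v n $ j" using Wc by (simp add: scalar_prod_sum)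
    qed (use Wc in simp)
    have "cmat M *\<^sub>v ?w \<noteq> 0\<^sub>v n"
    proof
      assume "cmat M *\<^sub>v ?w = 0\<^sub>v n"
      then have "?w = 0\<^sub>v n" using WMv[OF w] W0 by metis
      with w0 show False by simp
    qed
    then have "cnsq (cmat M *\<^sub>v ?w) \<noteq> 0" using cnsq_zero[of "cmat M *\<^sub>v ?w" n] Mc
      by (metis carrier_matD(1) carrier_vecI dim_mult_mat_vec)
    then show ?thesis using eM i cnsq_nonneg[of "cmat M *\<^sub>v ?w"] by auto
  qed
  have fin: "finite ((\<lambda>i. sqrt (e i)) ` {..<n})" and ne: "(\<lambda>i. sqrt (e i)) ` {..<n} \<noteq> {}" using n by auto
  have spos: "s > 0" unfolding s_eq using fin ne epos by (subst Min_gr_iff) auto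
  have sle: "s \<le> sqrt (e i)" if "i < n" for i unfolding s_eq using fin that by (intro Min_le) auto
  have s2le: "s^2 \<le> e i" if i: "i < n" for i
  proof -
    have "s^2 \<le> (sqrt (e i))^2" using sle[OF i] spos by (intro power_mono) auto
    then show ?thesis using epos[OF i] by simp
  qed
  have C1: "s^2 * cnsq z \<le> cnsq (cmat M *\<^sub>v z)" if z: "z \<in> carrier_vec n" for z
  proof -
    have "s^2 * cnsq z = (\<Sum>i<n. s^2 * (cmod (cinner (col VM i) z))^2)"
      unfolding unitary_parseval[OF VM VMa VMb z] by (simp add: sum_distrib_left)
    also have "\<dots> \<le> (\<Sum>i<n. e i * (cmod (cinner (col VM i) z))^2)"
      using s2le by (intro sum_mono mult_right_mono) auto
    also have "\<dots> = cnsq (cmat M *\<^sub>v z)" using qfM z by simp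
    finally show ?thesis .
  qed
  have C2: "sqrt (cnsq (cmat W *\<^sub>v y)) \<le> sqrt (cnsq y) / s" if y: "y \<in> carrier_vec n" for y
  proof -
    have Wy: "cmat W *\<^sub>v y \<in> carrier_vec n" using Wc y by (metis carrier_matD(1) carrier_vecI dim_mult_mat_vec)
    have "s^2 * cnsq (cmat W *\<^sub>v y) \<le> cnsq y"
      using C1[OF Wy] MWv[OF y] by simp
    then have "cnsq (cmat W *\<^sub>v y) \<le> cnsq y / s^2" using spos by (simp add: field_simps)
    then have "sqrt (cnsq (cmat W *\<^sub>v y)) \<le> sqrt (cnsq y / s^2)" by (rule real_sqrt_le_mono)
    also have "\<dots> = sqrt (cnsq y) / s" using spos by (simp add: real_sqrt_divide)
    finally show ?thesis .
  qed
  have "complex_of_real (mtrace (X * W)) = mtrace (cmat X * cmat W)"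
    using of_real_hom.mat_hom_mult[OF X W] mtrace_cmat[of "X * W" n] X W by (metis mult_carrier_mat)
  also have "\<dots> = mtrace (cmat W * cmat X)" using mtrace_comm[OF Xc Wc] .
  also have "\<dots> = (\<Sum>i<n. cinner (col VX i) ((cmat W * cmat X) *\<^sub>v col VX i))"
    using unitary_trace[OF VX VXb] Wc Xc by simp
  finally have tr: "complex_of_real (mtrace (X * W)) = (\<Sum>i<n. cinner (col VX i) (cmat W *\<^sub>v (cmat X *\<^sub>v col VX i)))"
    using assoc_mult_mat_vec[OF Wc Xc colc[OF VX]] by simp
  have termb: "cmod (cinner (col VX i) (cmat W *\<^sub>v (cmat X *\<^sub>v col VX i))) \<le> sqrt (d i) / s" if i: "i < n" for i
  proof -
    let ?v = "col VX i"
    have v: "?v \<in> carrier_vec n" using colc[OF VX] .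
    have Xv: "cmat X *\<^sub>v ?v \<in> carrier_vec n" using Xc v by (metis carrier_matD(1) carrier_vecI dim_mult_mat_vec)
    have WXv: "cmat W *\<^sub>v (cmat X *\<^sub>v ?v) \<in> carrier_vec n" using Wc Xv by (metis carrier_matD(1) carrier_vecI dim_mult_mat_vec)
    have "cnsq ?v = 1" using col_orth[OF VX VXa i i] cinner_self[of ?v] by simp
    then have "cmod (cinner ?v (cmat W *\<^sub>v (cmat X *\<^sub>v ?v))) \<le> sqrt (cnsq (cmat W *\<^sub>v (cmat X *\<^sub>v ?v)))"
      using cauchy_schwarz_c[OF v WXv] by simp
    also have "\<dots> \<le> sqrt (cnsq (cmat X *\<^sub>v ?v)) / s" using C2[OF Xv] .
    also have "\<dots> = sqrt (d i) / s" using dX i by simp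
    finally show ?thesis .
  qed
  have "mtrace (X * W) \<le> cmod (complex_of_real (mtrace (X * W)))" by simp
  also have "\<dots> \<le> (\<Sum>i<n. cmod (cinner (col VX i) (cmat W *\<^sub>v (cmat X *\<^sub>v col VX i))))"
    unfolding tr by (rule norm_sum)
  also have "\<dots> \<le> (\<Sum>i<n. sqrt (d i) / s)" using termb by (intro sum_mono) auto
  also have "\<dots> = nuclear_norm X / s" unfolding nuclear_norm_eq[OF svX] by (simp add: sum_divide_distrib)
  finally show ?thesis unfolding s_def .
qed


lemma pow_mat_left: fixes X :: "'a :: semiring_1 mat" assumes X: "X \<in> carrier_mat n n" shows "X * X ^\<^sub>m k = X ^\<^sub>m (Suc k)"
proof (induction k)
  case 0 then show ?case using X by simp
next
  case (Suc k)
  have "X * X ^\<^sub>m Suc k = (X * X ^\<^sub>m k) * X"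
    using X by (simp add: assoc_mult_mat[of X n n "X ^\<^sub>m k" n X n])
  also have "\<dots> = X ^\<^sub>m Suc (Suc k)" using Suc by simp
  finally show ?case .
qed

lemma pow_mat_smult: fixes X :: "'a :: comm_ring_1 mat" assumes X: "X \<in> carrier_mat n n" shows "(a \<cdot>\<^sub>m X) ^\<^sub>m k = a ^ k \<cdot>\<^sub>m X ^\<^sub>m k"
proof (induction k)
  case 0 then show ?case using X by (intro eq_matI) auto
next
  case (Suc k)
  have P: "X ^\<^sub>m k \<in> carrier_mat n n" using X by simp
  have "(a \<cdot>\<^sub>m X) ^\<^sub>m Suc k = (a ^ k \<cdot>\<^sub>m X ^\<^sub>m k) * (a \<cdot>\<^sub>m X)" using Suc by simp
  also have "\<dots> = a ^ k \<cdot>\<^sub>m (X ^\<^sub>m k * (a \<cdot>\<^sub>m X))" using mult_smult_assoc_mat[OF P, of "a \<cdot>\<^sub>m X" n] X by simp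
  also have "\<dots> = a ^ k \<cdot>\<^sub>m (a \<cdot>\<^sub>m (X ^\<^sub>m k * X))" using mult_smult_distrib[OF P X] by simp
  also have "\<dots> = a ^ Suc k \<cdot>\<^sub>m X ^\<^sub>m Suc k" by (intro eq_matI) (auto simp: mult_ac)
  finally show ?case .
qed

lemma pow_mat_double: fixes B :: "'a :: semiring_1 mat" assumes B: "B \<in> carrier_mat n n" shows "B ^\<^sub>m (2 * k) = (B ^\<^sub>m 2) ^\<^sub>m k"
proof (induction k)
  case 0 then show ?case using B by simp
next
  case (Suc k)
  have P: "B ^\<^sub>m (2 * k) \<in> carrier_mat n n" using B by simp
  have "B ^\<^sub>m (2 * Suc k) = B ^\<^sub>m (2 * k) * B * B" by (simp add: numeral_2_eq_2)
  also have "\<dots> = B ^\<^sub>m (2 * k) * (B * B)" using assoc_mult_mat[OF P B B] .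
  also have "B * B = B ^\<^sub>m 2" using B by (simp add: numeral_2_eq_2)
  finally show ?case using Suc by simp
qed

lemma mtrace_minus: assumes "A \<in> carrier_mat n n" "B \<in> carrier_mat n n"
  shows "mtrace (A - B) = mtrace A - mtrace B"
  unfolding mtrace_def using assms by (simp add: sum_subtractf)

lemma mtrace_smult: assumes "A \<in> carrier_mat n n" shows "mtrace (a \<cdot>\<^sub>m A) = a * mtrace A"
  unfolding mtrace_def using assms by (simp add: sum_distrib_left)

lemma smult_mat_vec: assumes A: "A \<in> carrier_mat n m" and v: "v \<in> carrier_vec m"
  shows "(a \<cdot>\<^sub>m A) *\<^sub>v v = a \<cdot>\<^sub>v (A *\<^sub>v v)"
proof (rule eq_vecI)
  fix i assume "i < dim_vec (a \<cdot>\<^sub>v (A *\<^sub>v v))"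
  then have i: "i < n" using A by simp
  show "((a \<cdot>\<^sub>m A) *\<^sub>v v) $ i = (a \<cdot>\<^sub>v (A *\<^sub>v v)) $ i"
    using A v i by (simp add: scalar_prod_sum sum_distrib_left mult.assoc)
qed (use A in simp)

lemma spec_scale: assumes Z: "Z \<in> carrier_mat n n" and n: "n > 0" and r: "r > 0"
  shows "spectral_radius (complex_of_real (1 / r) \<cdot>\<^sub>m Z) \<le> spectral_radius Z / r"
proof -
  let ?Y = "complex_of_real (1 / r) \<cdot>\<^sub>m Z"
  have Y: "?Y \<in> carrier_mat n n" using Z by simp
  obtain \<mu> where mu: "\<mu> \<in> spectrum ?Y" and eq: "spectral_radius ?Y = cmod \<mu>"
    using spectral_radius_mem_max(1)[OF Y n] by auto
  from mu obtain v where v: "v \<in> carrier_vec n" "v \<noteq> 0\<^sub>v n" and Yv: "?Y *\<^sub>v v = \<mu> \<cdot>\<^sub>v v"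
    unfolding spectrum_def eigenvalue_def eigenvector_def using Y by auto
  have "Z *\<^sub>v v = complex_of_real r \<cdot>\<^sub>v (?Y *\<^sub>v v)"
    using smult_mat_vec[OF Z v(1)] r v Z by (auto simp: smult_smult_assoc)
  also have "\<dots> = (complex_of_real r * \<mu>) \<cdot>\<^sub>v v" using Yv by (simp add: smult_smult_assoc)
  finally have "eigenvalue Z (complex_of_real r * \<mu>)"
    unfolding eigenvalue_def eigenvector_def using v Z by auto
  then have "cmod (complex_of_real r * \<mu>) \<le> spectral_radius Z"
    using spectral_radius_mem_max(2)[OF Z n] unfolding spectrum_def by auto
  then have "r * cmod \<mu> \<le> spectral_radius Z" using r by (simp add: norm_mult)
  then show ?thesis using eq r by (simp add: field_simps)
qed

lemma spec_nonneg: assumes Z: "Z \<in> carrier_mat n n" and n: "n > 0" shows "spectral_radius Z \<ge> 0"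
  using spectral_radius_mem_max(1)[OF Z n] by auto


lemma pow_bound: assumes X: "X \<in> carrier_mat n n" and n: "n > 0" and r: "rspec_radius X < r"
  shows "\<exists>C. \<forall>k i j. i < n \<longrightarrow> j < n \<longrightarrow> \<bar>(X ^\<^sub>m k) $$ (i,j)\<bar> \<le> C * r ^ k"
proof -
  have Xc: "cmat X \<in> carrier_mat n n" using X by simp
  have rho: "rspec_radius X = spectral_radius (cmat X)" unfolding rspec_radius_def ..
  have r0: "r > 0" using spec_nonneg[OF Xc n] r rho by simp
  define Y where "Y = complex_of_real (1 / r) \<cdot>\<^sub>m cmat X"
  have Y: "Y \<in> carrier_mat n n" unfolding Y_def using Xc by simp
  have "spectral_radius Y \<le> spectral_radius (cmat X) / r" unfolding Y_def using spec_scale[OF Xc n r0] .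
  also have "\<dots> < 1" using r r0 rho by (simp add: field_simps)
  finally have "spectral_radius Y < 1" .
  from spectral_radius_jnf_norm_bound_less_1_upper_triangular[OF Y this]
  obtain C where C: "\<And>k. norm_bound (Y ^\<^sub>m k) C" by auto
  have "\<bar>(X ^\<^sub>m k) $$ (i,j)\<bar> \<le> C * r ^ k" if i: "i < n" and j: "j < n" for k i j
  proof -
    have Yk: "Y ^\<^sub>m k = complex_of_real (1 / r) ^ k \<cdot>\<^sub>m cmat (X ^\<^sub>m k)"
      unfolding Y_def pow_mat_smult[OF Xc] of_real_hom.mat_hom_pow[OF X] ..
    have Xk: "X ^\<^sub>m k \<in> carrier_mat n n" using X by simp
    have "(Y ^\<^sub>m k) $$ (i,j) = (1 / complex_of_real r) ^ k * complex_of_real ((X ^\<^sub>m k) $$ (i,j))"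
      unfolding Yk using carrier_matD[OF Xk] i j by simp
    moreover have "norm ((Y ^\<^sub>m k) $$ (i,j)) \<le> C" using C[of k] Y i j unfolding norm_bound_def by simp
    ultimately have "(1 / r) ^ k * \<bar>(X ^\<^sub>m k) $$ (i,j)\<bar> \<le> C" using r0 by (simp add: norm_mult norm_power norm_divide)
    then show ?thesis using r0 by (simp add: field_simps)
  qed
  then show ?thesis by blast
qed

lemma series_sum: assumes X: "X \<in> carrier_mat n n" and n: "n > 0" and c: "rspec_radius X < c"
  and W: "W \<in> carrier_mat n n" and WM: "W * (c \<cdot>\<^sub>m 1\<^sub>m n - X) = 1\<^sub>m n"
  shows "(\<lambda>k. mtrace (X ^\<^sub>m Suc k) / c ^ Suc k) sums mtrace (W * X)"
proof -
  have Xc: "cmat X \<in> carrier_mat n n" using X by simp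
  define \<rho> where "\<rho> = rspec_radius X"
  have rho0: "\<rho> \<ge> 0" unfolding \<rho>_def rspec_radius_def using spec_nonneg[OF Xc n] .
  have c0: "c > 0" using rho0 c \<rho>_def by simp
  define r where "r = (\<rho> + c) / 2"
  have rlt: "\<rho> < r" "r < c" "r > 0" using c rho0 unfolding r_def \<rho>_def by auto
  obtain C where C: "\<And>k i j. i < n \<Longrightarrow> j < n \<Longrightarrow> \<bar>(X ^\<^sub>m k) $$ (i,j)\<bar> \<le> C * r ^ k"
    using pow_bound[OF X n, of r] rlt \<rho>_def by auto
  define M where "M = c \<cdot>\<^sub>m 1\<^sub>m n - X"
  have M: "M \<in> carrier_mat n n" unfolding M_def using X by (metis minus_carrier_mat one_carrier_mat smult_carrier_mat)
  define a where "a k = mtrace (W * X ^\<^sub>m Suc k) / c ^ k" for k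
  have step: "mtrace (X ^\<^sub>m Suc k) / c ^ Suc k = a k - a (Suc k)" for k
  proof -
    define P where "P = X ^\<^sub>m Suc k"
    define Q where "Q = X ^\<^sub>m Suc (Suc k)"
    have P: "P \<in> carrier_mat n n" and Q: "Q \<in> carrier_mat n n" unfolding P_def Q_def using X by auto
    have I: "c \<cdot>\<^sub>m 1\<^sub>m n \<in> carrier_mat n n" by simp
    have MP: "M * P = c \<cdot>\<^sub>m P - Q"
    proof -
      have "M * P = (c \<cdot>\<^sub>m 1\<^sub>m n) * P - X * P" unfolding M_def using minus_mult_distrib_mat[OF I X P] .
      also have "(c \<cdot>\<^sub>m 1\<^sub>m n) * P = c \<cdot>\<^sub>m P" using mult_smult_assoc_mat[of "1\<^sub>m n" n n P n c] P by simp
      also have "X * P = Q" unfolding P_def Q_def using pow_mat_left[OF X] .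
      finally show ?thesis .
    qed
    have "P = (W * M) * P" using WM P unfolding M_def by simp
    also have "\<dots> = W * (M * P)" using assoc_mult_mat[OF W M P] .
    also have "\<dots> = W * (c \<cdot>\<^sub>m P) - W * Q" unfolding MP using mult_minus_distrib_mat[of W n n "c \<cdot>\<^sub>m P" n Q] W P Q by simp
    also have "\<dots> = c \<cdot>\<^sub>m (W * P) - W * Q" using mult_smult_distrib[OF W P] by simp
    finally have "mtrace P = c * mtrace (W * P) - mtrace (W * Q)"
      using mtrace_minus[of "c \<cdot>\<^sub>m (W * P)" n "W * Q"] mtrace_smult[of "W * P" n c] W P Q by simp
    then show ?thesis unfolding a_def P_def Q_def using c0 by (simp add: field_simps)
  qed
  define K where "K = (\<Sum>i<n. \<Sum>j<n. \<bar>W $$ (i,j)\<bar>) * C * r"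
  have abound: "norm (a N) \<le> K * (r / c) ^ N" for N
  proof -
    have "\<bar>mtrace (W * X ^\<^sub>m Suc N)\<bar> = \<bar>\<Sum>i<n. \<Sum>j<n. W $$ (i,j) * (X ^\<^sub>m Suc N) $$ (j,i)\<bar>"
      unfolding mtrace_def using W X by (simp add: scalar_prod_sum)
    also have "\<dots> \<le> (\<Sum>i<n. \<Sum>j<n. \<bar>W $$ (i,j)\<bar> * \<bar>(X ^\<^sub>m Suc N) $$ (j,i)\<bar>)"
      by (rule order_trans[OF sum_abs sum_mono]) (auto intro!: order_trans[OF sum_abs] simp: abs_mult)
    also have "\<dots> \<le> (\<Sum>i<n. \<Sum>j<n. \<bar>W $$ (i,j)\<bar> * (C * r ^ Suc N))"
    proof (intro sum_mono mult_left_mono)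
      fix i j assume "i \<in> {..<n}" "j \<in> {..<n}"
      then show "\<bar>(X ^\<^sub>m Suc N) $$ (j,i)\<bar> \<le> C * r ^ Suc N" using C[of j i "Suc N"] by simp
    qed auto
    also have "\<dots> = (\<Sum>i<n. \<Sum>j<n. \<bar>W $$ (i,j)\<bar>) * (C * r ^ Suc N)"
      by (simp add: sum_distrib_right)
    also have "\<dots> = (\<Sum>i<n. \<Sum>j<n. \<bar>W $$ (i,j)\<bar>) * C * r * r ^ N"
      by (simp add: mult_ac)
    finally have "\<bar>mtrace (W * X ^\<^sub>m Suc N)\<bar> / c ^ N \<le> K * r ^ N / c ^ N"
      unfolding K_def using c0 by (simp add: divide_right_mono)
    then show ?thesis unfolding a_def using c0 by (simp add: power_divide abs_divide)
  qed
  have "(\<lambda>N. K * (r / c) ^ N) \<longlonglongrightarrow> 0"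
    using rlt by (intro tendsto_mult_right_zero LIMSEQ_power_zero) auto
  then have a0: "a \<longlonglongrightarrow> 0"
  proof (rule tendsto_0_le[of _ _ _ 1])
    show "\<forall>\<^sub>F x in sequentially. norm (a x) \<le> norm (K * (r / c) ^ x) * 1"
      by (rule always_eventually) (use abound in \<open>auto intro: order_trans[OF _ abs_ge_self]\<close>)
  qed
  have ps: "(\<Sum>k<N. mtrace (X ^\<^sub>m Suc k) / c ^ Suc k) = a 0 - a N" for N
    unfolding step by (rule sum_lessThan_telescope')
  have "(\<lambda>N. a 0 - a N) \<longlonglongrightarrow> a 0 - 0" using a0 by (intro tendsto_diff) auto
  then have "(\<lambda>k. mtrace (X ^\<^sub>m Suc k) / c ^ Suc k) sums a 0" unfolding sums_def ps by simp
  moreover have "a 0 = mtrace (W * X)" unfolding a_def using X by simp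
  ultimately show ?thesis by simp
qed


lemma minv_ok: assumes X: "X \<in> carrier_mat n n" and n: "n > 0" and c: "rspec_radius X < c"
  shows "(c \<cdot>\<^sub>m 1\<^sub>m n - X) * minv (c \<cdot>\<^sub>m 1\<^sub>m n - X) = 1\<^sub>m n \<and> minv (c \<cdot>\<^sub>m 1\<^sub>m n - X) * (c \<cdot>\<^sub>m 1\<^sub>m n - X) = 1\<^sub>m n
     \<and> minv (c \<cdot>\<^sub>m 1\<^sub>m n - X) \<in> carrier_mat n n"
proof -
  define M where "M = c \<cdot>\<^sub>m 1\<^sub>m n - X"
  have I: "c \<cdot>\<^sub>m 1\<^sub>m n \<in> carrier_mat n n" by simp
  have M: "M \<in> carrier_mat n n" unfolding M_def using X by (metis minus_carrier_mat one_carrier_mat smult_carrier_mat)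
  have Xc: "cmat X \<in> carrier_mat n n" using X by simp
  have det: "det M \<noteq> 0"
  proof
    assume "det M = 0"
    then obtain v where v: "v \<in> carrier_vec n" and v0: "v \<noteq> 0\<^sub>v n" and Mv: "M *\<^sub>v v = 0\<^sub>v n"
      using det_0_iff_vec_prod_zero_field[OF M] by auto
    have "M *\<^sub>v v = c \<cdot>\<^sub>v v - X *\<^sub>v v"
      unfolding M_def using minus_mult_distrib_mat_vec[OF I X v] smult_mat_vec[of "1\<^sub>m n" n n v c] v by simp
    then have Xv: "X *\<^sub>v v = c \<cdot>\<^sub>v v"
    proof -
      assume h: "M *\<^sub>v v = c \<cdot>\<^sub>v v - X *\<^sub>v v"
      show ?thesis
      proof (rule eq_vecI)
        fix i assume "i < dim_vec (c \<cdot>\<^sub>v v)"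
        then have i: "i < n" using v by simp
        have "(M *\<^sub>v v) $ i = 0" using Mv i by simp
        then have "c * v $ i - (X *\<^sub>v v) $ i = 0" using h i v X by simp
        then show "(X *\<^sub>v v) $ i = (c \<cdot>\<^sub>v v) $ i" using i v by simp
      qed (use X v in simp)
    qed
    define vc where "vc = map_vec complex_of_real v"
    have vc: "vc \<in> carrier_vec n" unfolding vc_def using v by simp
    obtain i where i: "i < n" and vi: "v $ i \<noteq> 0" using v v0 by (metis carrier_vecD eq_vecI index_zero_vec(1) index_zero_vec(2))
    have vc0: "vc \<noteq> 0\<^sub>v n"
    proof
      assume "vc = 0\<^sub>v n"
      then have "vc $ i = 0" using i by simp
      then show False using vi i v unfolding vc_def by simp
    qed
    have "cmat X *\<^sub>v vc = map_vec complex_of_real (X *\<^sub>v v)"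
      unfolding vc_def by (rule of_real_hom.mult_mat_vec_hom[OF X v, symmetric])
    also have "\<dots> = complex_of_real c \<cdot>\<^sub>v vc" unfolding Xv vc_def by (rule of_real_hom.vec_hom_smult)
    finally have "eigenvalue (cmat X) (complex_of_real c)"
      unfolding eigenvalue_def eigenvector_def using vc vc0 Xc by auto
    then have "cmod (complex_of_real c) \<in> cmod ` spectrum (cmat X)" unfolding spectrum_def by blast
    then have "cmod (complex_of_real c) \<le> spectral_radius (cmat X)" by (rule spectral_radius_mem_max(2)[OF Xc n])
    then show False using c unfolding rspec_radius_def by simp
  qed
  have U: "M \<in> Units (ring_mat TYPE(real) n ())" using det_non_zero_imp_unit[OF M det] .
  obtain W where W: "mat_inverse M = Some W"
    using mat_inverse(1)[OF M, where b="()"] U by (cases "mat_inverse M") auto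
  from mat_inverse(2)[OF M W] have "M * W = 1\<^sub>m n \<and> W * M = 1\<^sub>m n \<and> W \<in> carrier_mat n n" .
  moreover have "minv M = W" unfolding minv_def W by simp
  ultimately show ?thesis unfolding M_def by simp
qed

theorem theorem1:
  fixes B :: "real mat" and n :: nat
  assumes "n \<ge> 1"
    and "B \<in> carrier_mat n n"
    and "\<And>i j. i < n \<Longrightarrow> j < n \<Longrightarrow> B $$ (i, j) \<ge> 0"
    and "\<And>i. i < n \<Longrightarrow> (\<Sum>j<n. B $$ (i, j)) \<le> 1"
  defines "\<zeta> \<equiv> (1 / real n ^ 2) * (\<Sum>i<n. \<Sum>j<n. if B $$ (i, j) > 0 then 1 else 0)"
  defines "R \<equiv> (\<Sum>k. mtrace ((1 / (\<zeta> ^ Suc k * real n ^ Suc k)) \<cdot>\<^sub>m (B ^\<^sub>m (2 * Suc k))))"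
  assumes "\<zeta> * real n > rspec_radius (B ^\<^sub>m 2)"
  shows "summable (\<lambda>k. mtrace ((1 / (\<zeta> ^ Suc k * real n ^ Suc k)) \<cdot>\<^sub>m (B ^\<^sub>m (2 * Suc k))))
     \<and> R = mtrace (B ^\<^sub>m 2 * minv ((\<zeta> * real n) \<cdot>\<^sub>m 1\<^sub>m n - B ^\<^sub>m 2))
     \<and> R \<le> nuclear_norm (B ^\<^sub>m 2) / sigma_min ((\<zeta> * real n) \<cdot>\<^sub>m 1\<^sub>m n - B ^\<^sub>m 2)"
proof -
  have n0: "n > 0" using assms(1) by simp
  have Bc: "B \<in> carrier_mat n n" by fact
  define X where "X = B ^\<^sub>m 2"
  define c where "c = \<zeta> * real n"
  have X: "X \<in> carrier_mat n n" unfolding X_def using Bc by simp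
  have hc: "rspec_radius X < c" unfolding X_def c_def using assms(7) .
  define M where "M = c \<cdot>\<^sub>m 1\<^sub>m n - X"
  have M: "M \<in> carrier_mat n n" unfolding M_def using X by (metis minus_carrier_mat one_carrier_mat smult_carrier_mat)
  define W where "W = minv M"
  have MW: "M * W = 1\<^sub>m n" and WM: "W * M = 1\<^sub>m n" and W: "W \<in> carrier_mat n n"
    using minv_ok[OF X n0 hc] unfolding M_def W_def by auto
  have terms: "(\<lambda>k. mtrace ((1 / (\<zeta> ^ Suc k * real n ^ Suc k)) \<cdot>\<^sub>m (B ^\<^sub>m (2 * Suc k))))
      = (\<lambda>k. mtrace (X ^\<^sub>m Suc k) / c ^ Suc k)"
  proof
    fix k
    have e1: "B ^\<^sub>m (2 * Suc k) = X ^\<^sub>m Suc k" unfolding X_def using pow_mat_double[OF Bc] .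
    have e2: "\<zeta> ^ Suc k * real n ^ Suc k = c ^ Suc k" unfolding c_def by (simp add: power_mult_distrib)
    have "mtrace ((1 / (\<zeta> ^ Suc k * real n ^ Suc k)) \<cdot>\<^sub>m (B ^\<^sub>m (2 * Suc k)))
       = mtrace ((1 / c ^ Suc k) \<cdot>\<^sub>m (X ^\<^sub>m Suc k))" unfolding e1 e2 ..
    also have "\<dots> = (1 / c ^ Suc k) * mtrace (X ^\<^sub>m Suc k)" by (rule mtrace_smult[OF pow_carrier_mat[OF X]])
    finally show "mtrace ((1 / (\<zeta> ^ Suc k * real n ^ Suc k)) \<cdot>\<^sub>m (B ^\<^sub>m (2 * Suc k))) = mtrace (X ^\<^sub>m Suc k) / c ^ Suc k"
      by simp
  qed
  have sums: "(\<lambda>k. mtrace (X ^\<^sub>m Suc k) / c ^ Suc k) sums mtrace (W * X)"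
    using series_sum[OF X n0 hc W] WM unfolding M_def by simp
  have Req: "R = mtrace (W * X)" unfolding R_def terms using sums_unique[OF sums] by simp
  have "mtrace (W * X) = mtrace (X * W)" using mtrace_comm[OF W X] .
  then have R1: "R = mtrace (B ^\<^sub>m 2 * minv ((\<zeta> * real n) \<cdot>\<^sub>m 1\<^sub>m n - B ^\<^sub>m 2))"
    unfolding Req W_def M_def X_def c_def by simp
  have R2: "R \<le> nuclear_norm (B ^\<^sub>m 2) / sigma_min ((\<zeta> * real n) \<cdot>\<^sub>m 1\<^sub>m n - B ^\<^sub>m 2)"
    using trace_bound[OF X M W WM n0] Req mtrace_comm[OF W X] unfolding X_def M_def c_def by simp
  show ?thesis using sums_summable[OF sums] R1 R2 unfolding terms by simp
qed

end
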